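(* Suppose that a dumbbell, with holes $H$, $H'$ and path $P=x\dots x'$, is the underlying graph of some oriented graph $G$ derived from a Burling tree $(T,r,\ell,c)$. Then either $x$ is not a subordinate vertex of $H$ or $x'$ is not a subordinate vertex of $H'$.
   Context: Graphs are finite, without loops or multiple edges; oriented graphs have no pair of opposite arcs. A hole is an induced cycle of length at least $4$. A dumbbell is a graph made of a path $P=x\dots x'$ (possibly $x=x'$), a hole $H$ through $x$ and a hole $H'$ through $x'$, such that $V(H)\cap V(P)=\{x\}$, $V(H')\cap V(P)=\{x'\}$, $V(H)\cap V(H')=\{x\}\cap\{x'\}$, and there are no edges other than those of $P$, $H$ and $H'$. In a rooted tree $T$ with root $r$, each non-root vertex $v$ has a parent $p(v)$; children, leaves, ancestors and descendants are as usual. A branch is a sequence $v_1\dots v_k$ ($k\ge0$) with $v_i$ the parent of $v_{i+1}$; it starts at $v_1$. A Burling tree is a 4-tuple $(T,r,\ell,c)$: $T$ a rooted tree with root $r$; $\ell$ assigns to each non-leaf vertex $v$ one of its children $\ell(v)$ (the last-born of $v$); $c$ assigns to every vertex $v$ that is neither the root nor a last-born the vertex-set of a (possibly empty) branch starting at $\ell(p(v))$, and $c(v)=\emptyset$ if $v$ is the root or a last-born. The oriented graph fully derived from it has vertex-set $V(T)$ and an arc $uv$ iff $v\in c(u)$; an oriented graph is derived from the Burling tree if it is an induced subgraph of the fully derived one. A hole of an oriented graph means a hole of its underlying graph. If $G$ is derived from $T$ and $H$ is a hole of $G$, then (as established in the paper) $H$ with the inherited orientation has exactly two sources, called its antennas,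 and exactly two sinks; exactly one of these sinks is adjacent to both antennas and is an ancestor in $T$ of all vertices of $H$ other than the antennas: it is the pivot of $H$. A vertex of $H$ is subordinate if it is neither the pivot nor an antenna of $H$. *)

theory Defs
  imports Main
begin

text \<open>A rooted tree is given by a finite vertex set V, a root r and a parent
  function par (only meaningful on V - {r}).\<close>

definition parent_rel :: "'a set \<Rightarrow> 'a \<Rightarrow> ('a \<Rightarrow> 'a) \<Rightarrow> ('a \<times> 'a) set" where
  "parent_rel V r par = {(par v, v) | v. v \<in> V \<and> v \<noteq> r}"

definition ancestor :: "'a set \<Rightarrow> 'a \<Rightarrow> ('a \<Rightarrow> 'a) \<Rightarrow> 'a \<Rightarrow> 'a \<Rightarrow> bool" where
  "ancestor V r par a d \<longleftrightarrow> (a, d) \<in> (parent_rel V r par)\<^sup>*"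

definition children :: "'a set \<Rightarrow> 'a \<Rightarrow> ('a \<Rightarrow> 'a) \<Rightarrow> 'a \<Rightarrow> 'a set" where
  "children V r par v = {u \<in> V. u \<noteq> r \<and> par u = v}"

definition rooted_tree :: "'a set \<Rightarrow> 'a \<Rightarrow> ('a \<Rightarrow> 'a) \<Rightarrow> bool" where
  "rooted_tree V r par \<longleftrightarrow> finite V \<and> r \<in> V \<and> (\<forall>v\<in>V. v \<noteq> r \<longrightarrow> par v \<in> V)
     \<and> (\<forall>v\<in>V. ancestor V r par r v)"

definition branch_set :: "'a set \<Rightarrow> 'a \<Rightarrow> ('a \<Rightarrow> 'a) \<Rightarrow> 'a \<Rightarrow> 'a set \<Rightarrow> bool" where
  "branch_set V r par s B \<longleftrightarrow> B = {} \<or>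
     (\<exists>u\<in>V. ancestor V r par s u \<and> B = {w. ancestor V r par s w \<and> ancestor V r par w u})"

definition burling_tree ::
  "'a set \<Rightarrow> 'a \<Rightarrow> ('a \<Rightarrow> 'a) \<Rightarrow> ('a \<Rightarrow> 'a) \<Rightarrow> ('a \<Rightarrow> 'a set) \<Rightarrow> bool" where
  "burling_tree V r par lb c \<longleftrightarrow> rooted_tree V r par
     \<and> (\<forall>v\<in>V. children V r par v \<noteq> {} \<longrightarrow> lb v \<in> children V r par v)
     \<and> (\<forall>v\<in>V. (v = r \<or> v = lb (par v)) \<longrightarrow> c v = {})
     \<and> (\<forall>v\<in>V. v \<noteq> r \<and> v \<noteq> lb (par v) \<longrightarrow> branch_set V r par (lb (par v)) (c v))"

text \<open>The oriented graph derived from the Burling tree as the induced subgraph of the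
  fully derived graph on vertex set S (with S a subset of V): arc u v iff v in c u.\<close>
definition d_arc :: "'a set \<Rightarrow> ('a \<Rightarrow> 'a set) \<Rightarrow> 'a \<Rightarrow> 'a \<Rightarrow> bool" where
  "d_arc S c u v \<longleftrightarrow> u \<in> S \<and> v \<in> S \<and> v \<in> c u"

definition d_adj :: "'a set \<Rightarrow> ('a \<Rightarrow> 'a set) \<Rightarrow> 'a \<Rightarrow> 'a \<Rightarrow> bool" where
  "d_adj S c u v \<longleftrightarrow> d_arc S c u v \<or> d_arc S c v u"

text \<open>Hset is the vertex set of a hole of the derived graph; since the hole is induced,
  the neighbours of h in the hole are its neighbours in the graph lying in Hset.\<close>
definition hole_source :: "'a set \<Rightarrow> ('a \<Rightarrow> 'a set) \<Rightarrow> 'a set \<Rightarrow> 'a \<Rightarrow> bool" where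
  "hole_source S c Hset h \<longleftrightarrow> h \<in> Hset \<and> (\<forall>y\<in>Hset. d_adj S c h y \<longrightarrow> d_arc S c h y)"

definition hole_sink :: "'a set \<Rightarrow> ('a \<Rightarrow> 'a set) \<Rightarrow> 'a set \<Rightarrow> 'a \<Rightarrow> bool" where
  "hole_sink S c Hset h \<longleftrightarrow> h \<in> Hset \<and> (\<forall>y\<in>Hset. d_adj S c h y \<longrightarrow> d_arc S c y h)"

abbreviation hole_antenna :: "'a set \<Rightarrow> ('a \<Rightarrow> 'a set) \<Rightarrow> 'a set \<Rightarrow> 'a \<Rightarrow> bool" where
  "hole_antenna \<equiv> hole_source"

definition hole_pivot ::
  "'a set \<Rightarrow> 'a \<Rightarrow> ('a \<Rightarrow> 'a) \<Rightarrow> 'a set \<Rightarrow> ('a \<Rightarrow> 'a set) \<Rightarrow> 'a set \<Rightarrow> 'a \<Rightarrow> bool" where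
  "hole_pivot V r par S c Hset z \<longleftrightarrow> hole_sink S c Hset z
     \<and> (\<forall>a. hole_antenna S c Hset a \<longrightarrow> d_adj S c z a)
     \<and> (\<forall>w\<in>Hset. \<not> hole_antenna S c Hset w \<longrightarrow> ancestor V r par z w)"

definition subordinate ::
  "'a set \<Rightarrow> 'a \<Rightarrow> ('a \<Rightarrow> 'a) \<Rightarrow> 'a set \<Rightarrow> ('a \<Rightarrow> 'a set) \<Rightarrow> 'a set \<Rightarrow> 'a \<Rightarrow> bool" where
  "subordinate V r par S c Hset x \<longleftrightarrow> x \<in> Hset \<and> \<not> hole_antenna S c Hset x
     \<and> \<not> hole_pivot V r par S c Hset x"

text \<open>Cycles and paths are given as lists of distinct vertices; edges are 2-sets.\<close>
definition cycle_edges :: "'a list \<Rightarrow> 'a set set" where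
  "cycle_edges hs = {{hs ! i, hs ! ((i + 1) mod length hs)} | i. i < length hs}"

definition path_edges :: "'a list \<Rightarrow> 'a set set" where
  "path_edges ps = {{ps ! i, ps ! (i + 1)} | i. i + 1 < length ps}"

definition hole_list :: "'a list \<Rightarrow> bool" where
  "hole_list hs \<longleftrightarrow> distinct hs \<and> length hs \<ge> 4"

definition dumbbell :: "'a set \<Rightarrow> 'a set set \<Rightarrow> 'a list \<Rightarrow> 'a list \<Rightarrow> 'a list \<Rightarrow> bool" where
  "dumbbell Vd Ed hs ps hs' \<longleftrightarrow> hole_list hs \<and> hole_list hs' \<and> distinct ps \<and> ps \<noteq> []
     \<and> set hs \<inter> set ps = {hd ps} \<and> set hs' \<inter> set ps = {last ps}
     \<and> set hs \<inter> set hs' = {hd ps} \<inter> {last ps}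
     \<and> Vd = set hs \<union> set ps \<union> set hs'
     \<and> Ed = cycle_edges hs \<union> path_edges ps \<union> cycle_edges hs'"

end

theory Submission
  imports Defs
begin


locale bt =
  fixes V :: "'a set" and r :: 'a and par :: "'a \<Rightarrow> 'a" and lb :: "'a \<Rightarrow> 'a" and c :: "'a \<Rightarrow> 'a set"
  assumes BT: "burling_tree V r par lb c"
begin

abbreviation anc where "anc \<equiv> ancestor V r par"

definition dep :: "'a \<Rightarrow> nat" where "dep v = (LEAST n. (par ^^ n) v = r)"

lemma pr_iff: "(a,d) \<in> parent_rel V r par \<longleftrightarrow> a = par d \<and> d \<in> V \<and> d \<noteq> r"
  by (auto simp: parent_rel_def)

lemma rt: "rooted_tree V r par" using BT by (simp add: burling_tree_def)
lemma r_in: "r \<in> V" using rt by (simp add: rooted_tree_def)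
lemma par_in: "v \<in> V \<Longrightarrow> v \<noteq> r \<Longrightarrow> par v \<in> V" using rt by (simp add: rooted_tree_def)
lemma anc_r: "v \<in> V \<Longrightarrow> anc r v" using rt by (simp add: rooted_tree_def)

lemma reach: assumes "v \<in> V" shows "\<exists>n. (par^^n) v = r"
proof -
  have "(r,v) \<in> (parent_rel V r par)\<^sup>*" using anc_r[OF assms] by (simp add: ancestor_def)
  then show ?thesis
  proof (induction rule: rtrancl_induct)
    case base show ?case by (rule exI[of _ 0]) simp
  next
    case (step y z)
    then obtain n where "(par^^n) y = r" by blast
    moreover have "y = par z" using step(2) by (simp add: pr_iff)
    ultimately have "(par ^^ Suc n) z = r" by (simp add: funpow_Suc_right del: funpow.simps)
    then show ?case by blast
  qed
qed

lemma dep_prop: assumes "v \<in> V" shows "(par ^^ dep v) v = r"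
proof -
  obtain N where "(par^^N) v = r" using reach[OF assms] by blast
  then show ?thesis unfolding dep_def by (rule LeastI[where P="\<lambda>n. (par^^n) v = r"])
qed

lemma dep_par: assumes v: "v \<in> V" "v \<noteq> r" shows "dep v = Suc (dep (par v))"
proof -
  have pv: "par v \<in> V" using par_in v .
  have dN: "(par ^^ dep (par v)) (par v) = r" using dep_prop[OF pv] .
  have "(par ^^ Suc (dep (par v))) v = r" using dN by (simp add: funpow_Suc_right del: funpow.simps)
  hence le: "dep v \<le> Suc (dep (par v))" unfolding dep_def by (rule Least_le)
  have dv: "(par ^^ dep v) v = r" using dep_prop[OF v(1)] .
  have "dep v \<noteq> 0" proof assume "dep v = 0" then show False using dv v(2) by simp qed
  then obtain k where k: "dep v = Suc k" by (cases "dep v") auto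
  then have "(par^^k) (par v) = r" using dv by (simp add: funpow_Suc_right del: funpow.simps)
  hence "dep (par v) \<le> k" unfolding dep_def by (rule Least_le)
  with le k show ?thesis by simp
qed

lemma anc_dep: assumes "anc a d" shows "a = d \<or> (a \<in> V \<and> d \<in> V \<and> dep a < dep d)"
proof -
  have "(a,d) \<in> (parent_rel V r par)\<^sup>*" using assms by (simp add: ancestor_def)
  then show ?thesis
  proof (induction rule: rtrancl_induct)
    case base then show ?case by simp
  next
    case (step y z)
    have z: "y = par z" "z \<in> V" "z \<noteq> r" using step(2) by (auto simp: pr_iff)
    have "y \<in> V" using z par_in by simp
    moreover have "dep y < dep z" using dep_par[OF z(2,3)] z(1) by simp
    ultimately show ?case using step(3) z by auto
  qed
qed

lemma anc_antisym: "anc a b \<Longrightarrow> anc b a \<Longrightarrow> a = b" by (metis anc_dep less_asym)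
lemma anc_trans: "anc a b \<Longrightarrow> anc b d \<Longrightarrow> anc a d" unfolding ancestor_def by (rule rtrancl_trans)
lemma anc_refl: "anc a a" by (simp add: ancestor_def)
lemma anc_par: "v \<in> V \<Longrightarrow> v \<noteq> r \<Longrightarrow> anc (par v) v"
  unfolding ancestor_def by (rule r_into_rtrancl) (simp add: pr_iff)
lemma anc_strict: "anc z y \<Longrightarrow> z \<noteq> y \<Longrightarrow> y \<in> V \<and> y \<noteq> r \<and> anc z (par y)"
  unfolding ancestor_def by (erule rtranclE) (auto simp: pr_iff)

lemma anc_chain: assumes "anc a d" "anc b d" shows "anc a b \<or> anc b a"
proof -
  have "(a,d) \<in> (parent_rel V r par)\<^sup>*" using assms(1) by (simp add: ancestor_def)
  then show ?thesis using assms(2)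
  proof (induction arbitrary: b rule: rtrancl_induct)
    case base then show ?case by simp
  next
    case (step y z)
    have z: "y = par z" "z \<in> V" "z \<noteq> r" using step(2) by (auto simp: pr_iff)
    show ?case
    proof (cases "b = z")
      case True
      have "anc a y" using step(1) by (simp add: ancestor_def)
      moreover have "anc y z" using anc_par[OF z(2,3)] z(1) by simp
      ultimately show ?thesis using True anc_trans by blast
    next
      case False
      then have "anc b y" using anc_strict[OF step.prems False] z(1) by simp
      then show ?thesis using step.IH by blast
    qed
  qed
qed

lemma lb_facts: assumes "u \<in> V" "u \<noteq> r"
  shows "lb (par u) \<in> V \<and> lb (par u) \<noteq> r \<and> par (lb (par u)) = par u"
proof -
  have "u \<in> children V r par (par u)" using assms by (simp add: children_def)
  moreover have "par u \<in> V" using par_in assms .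
  ultimately have "lb (par u) \<in> children V r par (par u)" using BT unfolding burling_tree_def by blast
  then show ?thesis by (simp add: children_def)
qed

lemma c_facts: assumes "u \<in> V" "v \<in> c u"
  shows "u \<noteq> r \<and> u \<noteq> lb (par u) \<and> (\<exists>e. c u = {w. anc (lb (par u)) w \<and> anc w e})"
proof -
  have nr: "u \<noteq> r \<and> u \<noteq> lb (par u)" using BT assms unfolding burling_tree_def by auto
  then have "branch_set V r par (lb (par u)) (c u)" using BT assms unfolding burling_tree_def by auto
  then show ?thesis using nr assms unfolding branch_set_def by auto
qed

lemma c_anc: "u \<in> V \<Longrightarrow> v \<in> c u \<Longrightarrow> anc (lb (par u)) v"
  using c_facts by blast

lemma c_conv: assumes "u \<in> V" "v \<in> c u" "anc (lb (par u)) w" "anc w v" shows "w \<in> c u"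
proof -
  obtain e where e: "c u = {w. anc (lb (par u)) w \<and> anc w e}" using c_facts[OF assms(1,2)] by blast
  have "anc v e" using assms(2) e by auto
  then show ?thesis using e assms(3,4) anc_trans by blast
qed

lemma dep_lb: assumes "u \<in> V" "u \<noteq> r" shows "dep (lb (par u)) = dep u"
  using dep_par[OF assms] lb_facts[OF assms] dep_par[of "lb (par u)"] by simp

lemma c_dep: assumes "u \<in> V" "v \<in> c u" shows "dep u \<le> dep v \<and> (dep u = dep v \<longrightarrow> v = lb (par u))"
proof -
  have u: "u \<noteq> r" using c_facts[OF assms] by blast
  have "anc (lb (par u)) v" using c_anc[OF assms] .
  then show ?thesis using anc_dep dep_lb[OF assms(1) u] by fastforce
qed

lemma c_last: "v \<in> V \<Longrightarrow> v \<noteq> r \<Longrightarrow> v = lb (par v) \<Longrightarrow> c v = {}"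
  using BT unfolding burling_tree_def by blast

lemma arc_asym: assumes "u \<in> V" "v \<in> V" "v \<in> c u" "u \<in> c v" shows False
proof -
  have "dep u = dep v" using c_dep[OF assms(1,3)] c_dep[OF assms(2,4)] by simp
  then have v: "v = lb (par u)" using c_dep[OF assms(1,3)] by simp
  have u: "u \<noteq> r" using c_facts[OF assms(1,3)] by blast
  have "par v = par u" using lb_facts[OF assms(1) u] v by simp
  then have "v = lb (par v)" using v by simp
  moreover have "v \<noteq> r" using lb_facts[OF assms(1) u] v by simp
  ultimately have "c v = {}" using c_last assms(2) by blast
  then show False using assms(4) by simp
qed

lemma arc_incomp: assumes "u \<in> V" "v \<in> c u" shows "\<not> anc u v \<and> \<not> anc v u"
proof -
  have u: "u \<noteq> r" "u \<noteq> lb (par u)" using c_facts[OF assms] by auto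
  have l: "anc (lb (par u)) v" using c_anc[OF assms] .
  have dl: "dep (lb (par u)) = dep u" using dep_lb[OF assms(1) u(1)] .
  have lV: "lb (par u) \<in> V" using lb_facts[OF assms(1) u(1)] by simp
  have "\<not> anc (lb (par u)) u"
  proof
    assume "anc (lb (par u)) u"
    then show False using anc_dep dl u(2) by fastforce
  qed
  moreover have "\<not> anc u (lb (par u))"
  proof
    assume "anc u (lb (par u))"
    then show False using anc_dep dl u(2) by fastforce
  qed
  ultimately show ?thesis using l anc_trans anc_chain by blast
qed

lemma propag: assumes V: "z \<in> V" "y \<in> V" "w \<in> V" and zy: "anc z y" "z \<noteq> y"
  and a: "w \<in> c y \<or> y \<in> c w"
  shows "(anc z w \<and> z \<noteq> w) \<or> (z \<in> c w \<and> y \<in> c w)"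
  using a
proof
  assume wy: "w \<in> c y"
  have y: "y \<noteq> r" "anc z (par y)" using anc_strict[OF zy] by auto
  have "anc (par y) (lb (par y))" using anc_par lb_facts[OF V(2) y(1)] by metis
  then have "anc z w" using y(2) c_anc[OF V(2) wy] anc_trans by blast
  moreover have "z \<noteq> w" using arc_incomp[OF V(2) wy] zy(1) by blast
  ultimately show ?thesis by blast
next
  assume yw: "y \<in> c w"
  have w: "w \<noteq> r" using c_facts[OF V(3) yw] by blast
  have l: "anc (lb (par w)) y" using c_anc[OF V(3) yw] .
  show ?thesis
  proof (cases "anc (lb (par w)) z")
    case True
    then have "z \<in> c w" using c_conv[OF V(3) yw True zy(1)] by simp
    then show ?thesis using yw by blast
  next
    case False
    then have "anc z (lb (par w))" using anc_chain[OF l zy(1)] by blast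
    moreover have "z \<noteq> lb (par w)" using False anc_refl by metis
    ultimately have "anc z (par (lb (par w)))" using anc_strict by blast
    then have "anc z (par w)" using lb_facts[OF V(3) w] by simp
    then have "anc z w" using anc_par[OF V(3) w] anc_trans by blast
    moreover have "z \<noteq> w" using arc_incomp[OF V(3) yw] zy(1) by blast
    ultimately show ?thesis by blast
  qed
qed

end


lemma ndvd: assumes "4 \<le> (n::int)" "n dvd d" "d \<noteq> 0" "-n < d" "d < n" shows False
proof (cases "0 < d")
  case True then show False using zdvd_imp_le[OF assms(2) True] assms(5) by simp
next
  case False
  then have "0 < -d" using assms(3) by simp
  moreover have "n dvd -d" using assms(2) by simp
  ultimately show False using zdvd_imp_le assms(4) by fastforce
qed

lemma dvd_sym: "(n::int) dvd (a - b) \<longleftrightarrow> n dvd (b - a)"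
  by (metis dvd_minus_iff minus_diff_eq)

context bt begin

definition cyc :: "'a set \<Rightarrow> int \<Rightarrow> (int \<Rightarrow> 'a) \<Rightarrow> bool" where
  "cyc S n f \<longleftrightarrow> 4 \<le> n \<and> S \<subseteq> V \<and> (\<forall>i. f i \<in> S) \<and> (\<forall>i k. f i = f k \<longleftrightarrow> n dvd (i - k))
     \<and> (\<forall>i k. d_adj S c (f i) (f k) \<longleftrightarrow> (n dvd (k - i - 1) \<or> n dvd (k - i + 1)))"

lemma cyc_rev: assumes "cyc S n f" shows "cyc S n (\<lambda>i. f (-i))"
proof -
  have e1: "\<And>i k. n dvd (- i - - k) \<longleftrightarrow> n dvd (i - k)"
    by (metis dvd_minus_iff minus_diff_eq diff_minus_eq_add uminus_add_conv_diff)
  have e2: "\<And>i k. n dvd (- k - - i - 1) \<longleftrightarrow> n dvd (k - i + 1)"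
  proof -
    fix i k :: int
    have "- k - - i - 1 = -(k - i + 1)" by simp
    then show "n dvd (- k - - i - 1) \<longleftrightarrow> n dvd (k - i + 1)" by (simp only: dvd_minus_iff)
  qed
  have e3: "\<And>i k. n dvd (- k - - i + 1) \<longleftrightarrow> n dvd (k - i - 1)"
  proof -
    fix i k :: int
    have "- k - - i + 1 = -(k - i - 1)" by simp
    then show "n dvd (- k - - i + 1) \<longleftrightarrow> n dvd (k - i - 1)" by (simp only: dvd_minus_iff)
  qed
  show ?thesis using assms unfolding cyc_def
    apply (intro conjI)
    apply simp
    apply simp
    apply simp
    using e1 apply metis
    using e2 e3 by metis
qed

lemma cyc_range_rev: "range (\<lambda>i. f (-i)) = range (f :: int \<Rightarrow> 'b)"
proof
  show "range (\<lambda>i. f (- i)) \<subseteq> range f" by auto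
  show "range f \<subseteq> range (\<lambda>i. f (- i))"
  proof
    fix y assume "y \<in> range f"
    then obtain i where "y = f i" by auto
    then have "y = (\<lambda>i. f (-i)) (-i)" by simp
    then show "y \<in> range (\<lambda>i. f (- i))" by blast
  qed
qed

definition Gc :: "'a set \<Rightarrow> 'a set \<Rightarrow> 'a \<Rightarrow> bool" where
  "Gc S H s \<longleftrightarrow> (\<exists>s1 t. s1 \<in> H \<and> t \<in> H \<and> (\<forall>v\<in>H. d_adj S c s1 v \<longleftrightarrow> v = s \<or> v = t)
     \<and> s \<noteq> s1 \<and> t \<noteq> s1 \<and> t \<noteq> s \<and> d_arc S c s s1 \<and> d_arc S c t s1 \<and> hole_source S c H t
     \<and> (\<forall>y\<in>H. y \<notin> {s, s1, t} \<longrightarrow> anc s1 y \<and> s1 \<noteq> y))"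

lemma Gor: assumes cy: "cyc S n f" and src: "hole_source S c (range f) (f j)"
  and up: "anc (f (j+1)) (f (j-1))"
  shows "Gc S (range f) (f j)"
proof -
  have n4: "4 \<le> n" and SV: "S \<subseteq> V" and fS: "\<And>i. f i \<in> S"
    and feq: "\<And>i k. f i = f k \<longleftrightarrow> n dvd (i - k)"
    and fadj: "\<And>i k. d_adj S c (f i) (f k) \<longleftrightarrow> (n dvd (k - i - 1) \<or> n dvd (k - i + 1))"
    using cy unfolding cyc_def by blast+
  have fV: "\<And>i. f i \<in> V" using fS SV by blast
  have adj1: "d_adj S c (f j) (f (j+1))" using fadj by simp
  have adj2: "d_adj S c (f j) (f (j-1))" using fadj by simp
  have a1: "d_arc S c (f j) (f (j+1))" using src adj1 unfolding hole_source_def by blast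
  have a2: "d_arc S c (f j) (f (j-1))" using src adj2 unfolding hole_source_def by blast
  have ne12: "f (j+1) \<noteq> f (j-1)"
  proof
    assume "f (j+1) = f (j-1)"
    then have "n dvd 2" using feq[of "j+1" "j-1"] by simp
    then show False using ndvd[OF n4, of 2] n4 by simp
  qed
  have P: "\<And>k::nat. k \<le> nat (n-4) \<Longrightarrow> anc (f (j+1)) (f (j - 1 - int k)) \<and> f (j+1) \<noteq> f (j - 1 - int k)"
  proof -
    fix k :: nat
    show "k \<le> nat (n-4) \<Longrightarrow> anc (f (j+1)) (f (j - 1 - int k)) \<and> f (j+1) \<noteq> f (j - 1 - int k)"
    proof (induction k)
      case 0 then show ?case using up ne12 by simp
    next
      case (Suc k)
      have k: "int k + 1 \<le> n - 4" using Suc.prems by simp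
      have IH: "anc (f (j+1)) (f (j - 1 - int k))" "f (j+1) \<noteq> f (j - 1 - int k)" using Suc by auto
      have ad: "d_adj S c (f (j - 1 - int k)) (f (j - 1 - int (Suc k)))" using fadj by simp
      then have "f (j - 1 - int (Suc k)) \<in> c (f (j - 1 - int k)) \<or> f (j - 1 - int k) \<in> c (f (j - 1 - int (Suc k)))"
        unfolding d_adj_def d_arc_def by blast
      from propag[OF fV fV fV IH this]
      show ?case
      proof
        assume "f (j + 1) \<in> c (f (j - 1 - int (Suc k))) \<and> f (j - 1 - int k) \<in> c (f (j - 1 - int (Suc k)))"
        then have "d_adj S c (f (j - 1 - int (Suc k))) (f (j+1))" unfolding d_adj_def d_arc_def using fS by blast
        then have "n dvd (j + 1 - (j - 1 - int (Suc k)) - 1) \<or> n dvd (j + 1 - (j - 1 - int (Suc k)) + 1)"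
          using fadj by blast
        then have "n dvd (int k + 2) \<or> n dvd (int k + 4)" by (simp add: algebra_simps)
        then have False
        proof
          assume "n dvd (int k + 2)" then show False by (rule ndvd[OF n4]) (use k in linarith)+
        next
          assume "n dvd (int k + 4)" then show False by (rule ndvd[OF n4]) (use k in linarith)+
        qed
        then show ?thesis by simp
      qed simp
    qed
  qed
  have ALL: "\<forall>y\<in>range f. y \<notin> {f j, f (j+1), f (j+2)} \<longrightarrow> anc (f (j+1)) y \<and> f (j+1) \<noteq> y"
  proof (intro ballI impI)
    fix y assume y: "y \<in> range f" "y \<notin> {f j, f (j+1), f (j+2)}"
    then obtain i where i: "y = f i" by auto
    define k where "k = (j - 1 - i) mod n"
    have k0: "0 \<le> k" "k < n" using n4 unfolding k_def by auto
    have fk: "f (j - 1 - k) = f i"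
    proof -
      have "n dvd ((j - 1 - i) - (j - 1 - i) mod n)" by (simp add: mod_0_imp_dvd minus_mod_eq_mult_div)
      then have "n dvd ((j - 1 - k) - i)" unfolding k_def by (simp add: algebra_simps)
      then show ?thesis using feq by blast
    qed
    have "k \<le> n - 4"
    proof (rule ccontr)
      assume "\<not> k \<le> n - 4"
      then have "k = n - 3 \<or> k = n - 2 \<or> k = n - 1" using k0 by linarith
      then show False
      proof (elim disjE)
        assume "k = n - 3"
        then have "n dvd ((j - 1 - k) - (j+2))" by simp
        then have "f (j - 1 - k) = f (j+2)" using feq by blast
        then show False using fk i y by auto
      next
        assume "k = n - 2"
        then have "n dvd ((j - 1 - k) - (j+1))" by simp
        then have "f (j - 1 - k) = f (j+1)" using feq by blast
        then show False using fk i y by auto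
      next
        assume "k = n - 1"
        then have "n dvd ((j - 1 - k) - j)" by simp
        then have "f (j - 1 - k) = f j" using feq by blast
        then show False using fk i y by auto
      qed
    qed
    then have "nat k \<le> nat (n - 4)" by simp
    from P[OF this] show "anc (f (j+1)) y \<and> f (j+1) \<noteq> y" using fk i k0 by simp
  qed
  have f3: "f (j+3) \<notin> {f j, f (j+1), f (j+2)}"
  proof -
    have "\<not> n dvd 3" "\<not> n dvd 2" "\<not> n dvd 1" using ndvd[OF n4, of 3] ndvd[OF n4, of 2] ndvd[OF n4, of 1] n4 by auto
    then show ?thesis using feq[of "j+3" j] feq[of "j+3" "j+1"] feq[of "j+3" "j+2"] by auto
  qed
  have D3: "anc (f (j+1)) (f (j+3)) \<and> f (j+1) \<noteq> f (j+3)" using ALL f3 by blast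
  have ad23: "d_adj S c (f (j+3)) (f (j+2))" using fadj by simp
  have ad12: "d_adj S c (f (j+1)) (f (j+2))" using fadj by simp
  have "f (j+2) \<in> c (f (j+3)) \<or> f (j+3) \<in> c (f (j+2))" using ad23 unfolding d_adj_def d_arc_def by blast
  from propag[OF fV fV fV conjunct1[OF D3] conjunct2[OF D3] this]
  have tarcs: "f (j+1) \<in> c (f (j+2)) \<and> f (j+3) \<in> c (f (j+2))"
  proof
    assume "anc (f (j + 1)) (f (j + 2)) \<and> f (j + 1) \<noteq> f (j + 2)"
    moreover have "f (j+2) \<in> c (f (j+1)) \<or> f (j+1) \<in> c (f (j+2))" using ad12 unfolding d_adj_def d_arc_def by blast
    ultimately show ?thesis using arc_incomp fV by blast
  qed simp
  have nbr: "\<And>k. (n dvd (k - (j+1) - 1) \<or> n dvd (k - (j+1) + 1)) \<longleftrightarrow> (f k = f (j+2) \<or> f k = f j)"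
  proof -
    fix k
    have e: "k - (j+1) - 1 = k - (j+2)" "k - (j+1) + 1 = k - j" by simp_all
    show "(n dvd (k - (j+1) - 1) \<or> n dvd (k - (j+1) + 1)) \<longleftrightarrow> (f k = f (j+2) \<or> f k = f j)"
      by (simp only: e feq)
  qed
  have nbr2: "\<And>k. (n dvd (k - (j+2) - 1) \<or> n dvd (k - (j+2) + 1)) \<longleftrightarrow> (f k = f (j+3) \<or> f k = f (j+1))"
  proof -
    fix k
    have e: "k - (j+2) - 1 = k - (j+3)" "k - (j+2) + 1 = k - (j+1)" by simp_all
    show "(n dvd (k - (j+2) - 1) \<or> n dvd (k - (j+2) + 1)) \<longleftrightarrow> (f k = f (j+3) \<or> f k = f (j+1))"
      by (simp only: e feq)
  qed
  have tsrc: "hole_source S c (range f) (f (j+2))"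
    unfolding hole_source_def
  proof (intro conjI ballI impI)
    show "f (j+2) \<in> range f" by simp
    fix y assume "y \<in> range f" "d_adj S c (f (j + 2)) y"
    then obtain k where k: "y = f k" "d_adj S c (f (j + 2)) (f k)" by auto
    then have "f k = f (j+3) \<or> f k = f (j+1)" using fadj nbr2 by blast
    then show "d_arc S c (f (j + 2)) y" using tarcs k fS unfolding d_arc_def by auto
  qed
  have s1n: "\<forall>v\<in>range f. d_adj S c (f (j+1)) v \<longleftrightarrow> v = f j \<or> v = f (j+2)"
  proof
    fix v assume "v \<in> range f"
    then obtain k where k: "v = f k" by auto
    show "d_adj S c (f (j+1)) v \<longleftrightarrow> v = f j \<or> v = f (j+2)" using fadj[of "j+1" k] nbr[of k] k by auto
  qed
  have d01: "f j \<noteq> f (j+1)" "f (j+2) \<noteq> f (j+1)" "f (j+2) \<noteq> f j"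
  proof -
    have "\<not> n dvd (-1)" "\<not> n dvd 1" "\<not> n dvd 2" using ndvd[OF n4, of "-1"] ndvd[OF n4, of 1] ndvd[OF n4, of 2] n4 by auto
    then show "f j \<noteq> f (j+1)" "f (j+2) \<noteq> f (j+1)" "f (j+2) \<noteq> f j"
      using feq[of j "j+1"] feq[of "j+2" "j+1"] feq[of "j+2" j] by auto
  qed
  have arct: "d_arc S c (f (j+2)) (f (j+1))" using tarcs fS unfolding d_arc_def by blast
  show ?thesis unfolding Gc_def
    apply (rule exI[of _ "f (j+1)"])
    apply (rule exI[of _ "f (j+2)"])
    using s1n d01 a1 arct tsrc ALL by auto
qed

end

context bt begin

lemma c_chain: assumes "u \<in> V" "v \<in> c u" "w \<in> c u" shows "anc v w \<or> anc w v"
proof -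
  obtain e where e: "c u = {w. anc (lb (par u)) w \<and> anc w e}" using c_facts[OF assms(1,2)] by blast
  then show ?thesis using assms(2,3) anc_chain by auto
qed

lemma Gsub: assumes cy: "cyc S n f" and src: "hole_source S c (range f) (f j)"
  shows "Gc S (range f) (f j)"
proof -
  have SV: "S \<subseteq> V" and fS: "\<And>i. f i \<in> S"
    and fadj: "\<And>i k. d_adj S c (f i) (f k) \<longleftrightarrow> (n dvd (k - i - 1) \<or> n dvd (k - i + 1))"
    using cy unfolding cyc_def by blast+
  have fV: "\<And>i. f i \<in> V" using fS SV by blast
  have adj1: "d_adj S c (f j) (f (j+1))" using fadj by simp
  have adj2: "d_adj S c (f j) (f (j-1))" using fadj by simp
  have a1: "f (j+1) \<in> c (f j)" using src adj1 unfolding hole_source_def d_arc_def by blast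
  have a2: "f (j-1) \<in> c (f j)" using src adj2 unfolding hole_source_def d_arc_def by blast
  have "anc (f (j+1)) (f (j-1)) \<or> anc (f (j-1)) (f (j+1))"
    using c_chain[OF fV a1 a2] .
  then show ?thesis
  proof
    assume "anc (f (j+1)) (f (j-1))"
    then show ?thesis using Gor[OF cy src] by simp
  next
    assume up: "anc (f (j-1)) (f (j+1))"
    let ?g = "\<lambda>i. f (-i)"
    have cy': "cyc S n ?g" using cyc_rev[OF cy] .
    have rg: "range ?g = range f" by (rule cyc_range_rev)
    have src': "hole_source S c (range ?g) (?g (-j))" using src rg by simp
    have e: "- (-j+1) = j - 1" "- (-j-1) = j + 1" by simp_all
    have up': "anc (?g (-j+1)) (?g (-j-1))" using up by (simp only: e)
    have "Gc S (range ?g) (?g (-j))" using Gor[OF cy' src' up'] .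
    then show ?thesis using rg by simp
  qed
qed

lemma src_ex: assumes cy: "cyc S n f" shows "\<exists>s\<in>range f. hole_source S c (range f) s"
proof -
  have SV: "S \<subseteq> V" and fS: "\<And>i. f i \<in> S" using cy unfolding cyc_def by blast+
  have HV: "\<And>y. y \<in> range f \<Longrightarrow> y \<in> V" using fS SV by blast
  obtain m where m: "m \<in> range f" "\<And>y. y \<in> range f \<Longrightarrow> dep m \<le> dep y"
    using ex_has_least_nat[of "\<lambda>y. y \<in> range f" "f 0" dep] by auto
  show ?thesis
  proof (cases "hole_source S c (range f) m")
    case True then show ?thesis using m by blast
  next
    case False
    then obtain y where y: "y \<in> range f" "d_adj S c m y" "\<not> d_arc S c m y"
      using m unfolding hole_source_def by blast
    then have ym: "m \<in> c y" unfolding d_adj_def d_arc_def by blast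
    have "hole_source S c (range f) y"
      unfolding hole_source_def
    proof (intro conjI ballI impI)
      show "y \<in> range f" by fact
      fix y' assume y': "y' \<in> range f" "d_adj S c y y'"
      show "d_arc S c y y'"
      proof (rule ccontr)
        assume "\<not> d_arc S c y y'"
        then have yy: "y \<in> c y'" using y' unfolding d_adj_def d_arc_def by blast
        have "dep y' \<le> dep y" "dep y \<le> dep m" "dep m \<le> dep y'"
          using c_dep[OF HV[OF y'(1)] yy] c_dep[OF HV[OF y(1)] ym] m(2)[OF y'(1)] by auto
        then have "y = lb (par y')" using c_dep[OF HV[OF y'(1)] yy] by simp
        moreover have "y' \<noteq> r" using c_facts[OF HV[OF y'(1)] yy] by blast
        ultimately have "y \<noteq> r" "y = lb (par y)" using lb_facts[OF HV[OF y'(1)]] by auto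
        then have "c y = {}" using c_last HV[OF y(1)] by blast
        then show False using ym by simp
      qed
    qed
    then show ?thesis using y by blast
  qed
qed

lemma Gc_src: assumes cy: "cyc S n f" and "hole_source S c (range f) a" shows "Gc S (range f) a"
proof -
  obtain j where "a = f j" using assms(2) unfolding hole_source_def by blast
  then show ?thesis using Gsub[OF cy] assms(2) by blast
qed

lemma hole_main: assumes cy: "cyc S n f" and x: "x \<in> range f"
  and ns: "\<not> hole_source S c (range f) x" and np: "\<not> hole_pivot V r par S c (range f) x"
  shows "\<exists>z\<in>range f. anc z x \<and> z \<noteq> x"
proof -
  let ?H = "range f"
  have SV: "S \<subseteq> V" using cy unfolding cyc_def by blast
  have arcV: "\<And>u v. d_arc S c u v \<Longrightarrow> u \<in> V \<and> v \<in> V \<and> v \<in> c u" using SV unfolding d_arc_def by blast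
  have asym: "\<And>u v. d_arc S c u v \<Longrightarrow> d_arc S c v u \<Longrightarrow> False" using arcV arc_asym by blast
  have adjI: "\<And>u v. d_arc S c u v \<Longrightarrow> d_adj S c v u" "\<And>u v. d_arc S c u v \<Longrightarrow> d_adj S c u v"
    unfolding d_adj_def by blast+
  obtain s where s: "s \<in> ?H" "hole_source S c ?H s" using src_ex[OF cy] by blast
  obtain s1 t where G: "s1 \<in> ?H" "t \<in> ?H" "\<forall>v\<in>?H. d_adj S c s1 v \<longleftrightarrow> v = s \<or> v = t"
     "s \<noteq> s1" "t \<noteq> s1" "t \<noteq> s" "d_arc S c s s1" "d_arc S c t s1" "hole_source S c ?H t"
     "\<forall>y\<in>?H. y \<notin> {s, s1, t} \<longrightarrow> anc s1 y \<and> s1 \<noteq> y"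
    using Gc_src[OF cy s(2)] unfolding Gc_def by blast
  have srcs: "\<And>a. hole_source S c ?H a \<Longrightarrow> a = s \<or> a = t"
  proof (rule ccontr)
    fix a assume sa: "hole_source S c ?H a" and na: "\<not> (a = s \<or> a = t)"
    have aH: "a \<in> ?H" using sa unfolding hole_source_def by blast
    have as1: "a \<noteq> s1"
    proof
      assume "a = s1"
      then have "d_arc S c s1 s" using sa adjI(1)[OF G(7)] s(1) unfolding hole_source_def by blast
      then show False using asym G(7) by blast
    qed
    have Da: "anc s1 a \<and> s1 \<noteq> a" using G(10) aH na as1 by blast
    obtain s1' t' where G': "s1' \<in> ?H" "t' \<in> ?H" "\<forall>v\<in>?H. d_adj S c s1' v \<longleftrightarrow> v = a \<or> v = t'"
       "a \<noteq> s1'" "t' \<noteq> s1'" "t' \<noteq> a" "d_arc S c a s1'" "d_arc S c t' s1'" "hole_source S c ?H t'"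
       "\<forall>y\<in>?H. y \<notin> {a, s1', t'} \<longrightarrow> anc s1' y \<and> s1' \<noteq> y"
      using Gc_src[OF cy sa] unfolding Gc_def by blast
    have ne1: "s1' \<noteq> s1"
    proof
      assume "s1' = s1"
      then have "d_adj S c s1 a" using G'(3) aH by blast
      then show False using G(3) aH na by blast
    qed
    have ne2: "s1' \<noteq> s" "s1' \<noteq> t"
    proof -
      show "s1' \<noteq> s"
      proof
        assume e: "s1' = s"
        then have "d_arc S c s a" using s(2) adjI(1)[OF G'(7)] aH unfolding hole_source_def by blast
        then show False using asym G'(7) e by blast
      qed
      show "s1' \<noteq> t"
      proof
        assume e: "s1' = t"
        then have "d_arc S c t a" using G(9) adjI(1)[OF G'(7)] aH unfolding hole_source_def by blast
        then show False using asym G'(7) e by blast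
      qed
    qed
    have ne3: "s1 \<noteq> t'"
    proof
      assume "s1 = t'"
      then have "d_adj S c s1 s1'" using adjI(2)[OF G'(8)] by simp
      then show False using G(3) G'(1) ne2 by blast
    qed
    have "anc s1' s1" using G'(10) G(1) as1 ne1 ne3 by auto
    moreover have "anc s1 s1'" using G(10) G'(1) ne1 ne2 by auto
    ultimately show False using anc_antisym ne1 by blast
  qed
  have piv: "hole_pivot V r par S c ?H s1"
    unfolding hole_pivot_def hole_sink_def
  proof (intro conjI allI ballI impI)
    show "s1 \<in> ?H" by fact
    fix y assume "y \<in> ?H" "d_adj S c s1 y"
    then have "y = s \<or> y = t" using G(3) by blast
    then show "d_arc S c y s1" using G(7,8) by blast
  next
    fix a assume "hole_source S c ?H a"
    then have "a = s \<or> a = t" using srcs by blast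
    then show "d_adj S c s1 a" using adjI(1) G(7,8) by blast
  next
    fix w assume w: "w \<in> ?H" "\<not> hole_source S c ?H w"
    then have "w \<noteq> s" "w \<noteq> t" using s(2) G(9) by blast+
    then show "anc s1 w" using G(10) w(1) anc_refl by (cases "w = s1") auto
  qed
  have "x \<noteq> s1" using piv np by blast
  moreover have "x \<noteq> s" "x \<noteq> t" using ns s(2) G(9) by blast+
  ultimately have "anc s1 x \<and> s1 \<noteq> x" using G(10) x by blast
  then show ?thesis using G(1) by blast
qed

end


lemma dvd_mod_diff: "(N::int) dvd (x - x mod N)"
  by (simp add: mod_0_imp_dvd minus_mod_eq_mult_div)

lemma ce_sub: assumes "e \<in> cycle_edges hs" "hs \<noteq> []" shows "e \<subseteq> set hs"
proof -
  obtain i where i: "i < length hs" "e = {hs ! i, hs ! ((i + 1) mod length hs)}"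
    using assms(1) unfolding cycle_edges_def by blast
  have "(i + 1) mod length hs < length hs" using assms(2) by simp
  then show ?thesis using i by auto
qed

lemma ce_ne: assumes "e \<in> cycle_edges hs" "hole_list hs" shows "\<exists>a b. e = {a, b} \<and> a \<noteq> b"
proof -
  obtain i where i: "i < length hs" "e = {hs ! i, hs ! ((i + 1) mod length hs)}"
    using assms(1) unfolding cycle_edges_def by blast
  have L: "4 \<le> length hs" "distinct hs" using assms(2) unfolding hole_list_def by auto
  have "(i + 1) mod length hs \<noteq> i"
  proof (cases "i + 1 < length hs")
    case True then show ?thesis by simp
  next
    case False then have "i + 1 = length hs" using i by simp
    then show ?thesis using L by simp
  qed
  moreover have "0 < length hs" using L(1) by linarith
  then have "(i + 1) mod length hs < length hs" by (rule mod_less_divisor)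
  ultimately have "hs ! i \<noteq> hs ! ((i + 1) mod length hs)"
    using nth_eq_iff_index_eq[OF L(2) i(1), of "(i + 1) mod length hs"] by auto
  then show ?thesis using i by blast
qed

lemma pe_sub: assumes "e \<in> path_edges ps" shows "e \<subseteq> set ps"
  using assms unfolding path_edges_def by auto

lemma pe_ne: assumes "e \<in> path_edges ps" "distinct ps" shows "\<exists>a b. e = {a, b} \<and> a \<noteq> b"
proof -
  obtain i where i: "i + 1 < length ps" "e = {ps ! i, ps ! (i + 1)}"
    using assms(1) unfolding path_edges_def by blast
  have "ps ! i \<noteq> ps ! (i+1)" using nth_eq_iff_index_eq[OF assms(2), of i "i+1"] i(1) by simp
  then show ?thesis using i by blast
qed

context bt begin

lemma cyc_of_list:
  assumes hl: "hole_list hs" and HS: "set hs \<subseteq> S" and SV: "S \<subseteq> V"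
    and adj: "\<forall>u\<in>set hs. \<forall>v\<in>set hs. d_adj S c u v \<longleftrightarrow> {u,v} \<in> cycle_edges hs"
    and fdef: "\<And>i. f i = hs ! nat (i mod int (length hs))"
  shows "cyc S (int (length hs)) f \<and> range f = set hs"
proof -
  define L where "L = length hs"
  define N where "N = int L"
  have fd: "\<And>i. f i = hs ! nat (i mod N)" using fdef unfolding N_def L_def by simp
  have L4: "4 \<le> L" and dist: "distinct hs" using hl unfolding hole_list_def L_def by auto
  have N4: "4 \<le> N" using L4 unfolding N_def by simp
  have idx: "\<And>i. nat (i mod N) < L" using N4 unfolding N_def by (simp add: nat_less_iff)
  have fin: "\<And>i. f i \<in> set hs" using idx fd unfolding L_def by simp
  have fa: "\<And>a. a < L \<Longrightarrow> f (int a) = hs ! a"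
  proof -
    fix a assume a: "a < L"
    have "int a mod N = int a" using a unfolding N_def by simp
    then show "f (int a) = hs ! a" using fd by simp
  qed
  have fa1: "\<And>a. a < L \<Longrightarrow> f (int a + 1) = hs ! ((a + 1) mod L)"
  proof -
    fix a assume a: "a < L"
    have "(int a + 1) mod N = int ((a + 1) mod L)" unfolding N_def by (simp add: of_nat_mod add.commute)
    then show "f (int a + 1) = hs ! ((a + 1) mod L)" using fd by simp
  qed
  have rng: "range f = set hs"
  proof
    show "range f \<subseteq> set hs" using fin by auto
    show "set hs \<subseteq> range f"
    proof
      fix y assume "y \<in> set hs"
      then obtain a where "a < L" "y = hs ! a" unfolding L_def by (auto simp: in_set_conv_nth)
      then show "y \<in> range f" using fa by (metis rangeI)
    qed
  qed
  have feq: "\<And>i k. f i = f k \<longleftrightarrow> N dvd (i - k)"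
  proof -
    fix i k
    have "f i = f k \<longleftrightarrow> nat (i mod N) = nat (k mod N)"
      unfolding fd using nth_eq_iff_index_eq[OF dist] idx unfolding L_def by blast
    also have "\<dots> \<longleftrightarrow> i mod N = k mod N" using N4 by (simp add: eq_nat_nat_iff)
    also have "\<dots> \<longleftrightarrow> N dvd (i - k)" by (rule mod_eq_dvd_iff)
    finally show "f i = f k \<longleftrightarrow> N dvd (i - k)" .
  qed
  have fadj: "\<And>i k. d_adj S c (f i) (f k) \<longleftrightarrow> (N dvd (k - i - 1) \<or> N dvd (k - i + 1))"
  proof -
    fix i k
    have "d_adj S c (f i) (f k) \<longleftrightarrow> {f i, f k} \<in> cycle_edges hs" using adj fin by blast
    also have "\<dots> \<longleftrightarrow> (N dvd (k - i - 1) \<or> N dvd (k - i + 1))"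
    proof
      assume "{f i, f k} \<in> cycle_edges hs"
      then obtain a where a: "a < L" "{f i, f k} = {hs ! a, hs ! ((a + 1) mod L)}"
        unfolding cycle_edges_def L_def by blast
      then have "{f i, f k} = {f (int a), f (int a + 1)}" using fa fa1 by simp
      then have "(f i = f (int a) \<and> f k = f (int a + 1)) \<or> (f i = f (int a + 1) \<and> f k = f (int a))"
        by (simp add: doubleton_eq_iff)
      then show "N dvd (k - i - 1) \<or> N dvd (k - i + 1)"
      proof
        assume h: "f i = f (int a) \<and> f k = f (int a + 1)"
        then have "N dvd (k - (int a + 1))" "N dvd (i - int a)" using feq by blast+
        then have "N dvd (k - (int a + 1)) - (i - int a)" by (rule dvd_diff)
        moreover have "(k - (int a + 1)) - (i - int a) = k - i - 1" by simp
        ultimately show ?thesis by simp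
      next
        assume h: "f i = f (int a + 1) \<and> f k = f (int a)"
        then have "N dvd (k - int a)" "N dvd (i - (int a + 1))" using feq by blast+
        then have "N dvd (k - int a) - (i - (int a + 1))" by (rule dvd_diff)
        moreover have "(k - int a) - (i - (int a + 1)) = k - i + 1" by simp
        ultimately show ?thesis by simp
      qed
    next
      assume "N dvd (k - i - 1) \<or> N dvd (k - i + 1)"
      then show "{f i, f k} \<in> cycle_edges hs"
      proof
        assume h: "N dvd (k - i - 1)"
        define a where "a = nat (i mod N)"
        have aL: "a < L" unfolding a_def using idx .
        have ia: "int a = i mod N" unfolding a_def using N4 by simp
        have "N dvd (i - i mod N)" by (rule dvd_mod_diff)
        then have e1: "f i = f (int a)" using feq ia by simp
        have "N dvd ((k - i - 1) + (i - i mod N))" using dvd_add[OF h dvd_mod_diff] .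
        moreover have "(k - i - 1) + (i - i mod N) = k - (int a + 1)" using ia by simp
        ultimately have e2: "f k = f (int a + 1)" using feq by simp
        have "{f i, f k} = {hs ! a, hs ! ((a + 1) mod L)}" using e1 e2 fa[OF aL] fa1[OF aL] by simp
        then show ?thesis unfolding cycle_edges_def mem_Collect_eq
          by (intro exI[of _ a]) (use aL in \<open>simp add: L_def\<close>)
      next
        assume h: "N dvd (k - i + 1)"
        define a where "a = nat ((i - 1) mod N)"
        have aL: "a < L" unfolding a_def using idx .
        have ia: "int a = (i - 1) mod N" unfolding a_def using N4 by simp
        have "N dvd ((i - 1) - (i - 1) mod N)" by (rule dvd_mod_diff)
        moreover have "(i - 1) - (i - 1) mod N = i - (int a + 1)" using ia by simp
        ultimately have e1: "f i = f (int a + 1)" using feq by simp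
        have "N dvd ((k - i + 1) + ((i - 1) - (i - 1) mod N))" using dvd_add[OF h dvd_mod_diff] .
        moreover have "(k - i + 1) + ((i - 1) - (i - 1) mod N) = k - int a" using ia by simp
        ultimately have e2: "f k = f (int a)" using feq by simp
        have "{f i, f k} = {hs ! a, hs ! ((a + 1) mod L)}" using e1 e2 fa[OF aL] fa1[OF aL] by auto
        then show ?thesis unfolding cycle_edges_def mem_Collect_eq
          by (intro exI[of _ a]) (use aL in \<open>simp add: L_def\<close>)
      qed
    qed
    finally show "d_adj S c (f i) (f k) \<longleftrightarrow> (N dvd (k - i - 1) \<or> N dvd (k - i + 1))" .
  qed
  have fS: "\<forall>i. f i \<in> S" using fin HS by blast
  have "cyc S N f" unfolding cyc_def
  proof (intro conjI)
    show "4 \<le> N" by (rule N4)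
    show "S \<subseteq> V" by (rule SV)
    show "\<forall>i. f i \<in> S" by (rule fS)
    show "\<forall>i k. (f i = f k) = (N dvd i - k)" by (intro allI) (rule feq)
    show "\<forall>i k. d_adj S c (f i) (f k) = (N dvd k - i - 1 \<or> N dvd k - i + 1)" by (intro allI) (rule fadj)
  qed
  moreover have "N = int (length hs)" unfolding N_def L_def by simp
  ultimately show ?thesis using rng by simp
qed

lemma step_prop: assumes SV: "S \<subseteq> V" and S: "z \<in> S" "y \<in> S" "w \<in> S" and D: "anc z y \<and> z \<noteq> y"
  and a: "d_adj S c y w" and na: "\<not> d_adj S c z w" shows "anc z w \<and> z \<noteq> w"
proof -
  have "w \<in> c y \<or> y \<in> c w" using a unfolding d_adj_def d_arc_def by blast
  from propag[of z y w, OF _ _ _ conjunct1[OF D] conjunct2[OF D] this] S SV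
  have "(anc z w \<and> z \<noteq> w) \<or> (z \<in> c w \<and> y \<in> c w)" by blast
  then show ?thesis using na S unfolding d_adj_def d_arc_def by blast
qed

end

context bt begin

lemma walk:
  assumes cy: "cyc S n g" and ps: "ps \<noteq> []" "set ps \<subseteq> S" and lst: "last ps \<in> range g"
    and nadj: "\<forall>w\<in>set ps \<union> range g. w \<noteq> hd ps \<longrightarrow> \<not> d_adj S c z w"
    and padj: "\<forall>i. i + 1 < length ps \<longrightarrow> d_adj S c (ps ! i) (ps ! (i+1))"
    and zS: "z \<in> S" and D0: "anc z (hd ps)" "z \<noteq> hd ps"
  shows "\<forall>v\<in>range g. anc z v \<and> z \<noteq> v"
proof -
  have SV: "S \<subseteq> V" and gS: "\<And>i. g i \<in> S"
    and geq: "\<And>i k. g i = g k \<longleftrightarrow> n dvd (i - k)"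
    and gadj: "\<And>i k. d_adj S c (g i) (g k) \<longleftrightarrow> (n dvd (k - i - 1) \<or> n dvd (k - i + 1))"
    using cy unfolding cyc_def by blast+
  have P: "\<And>i. i < length ps \<Longrightarrow> anc z (ps ! i) \<and> z \<noteq> ps ! i"
  proof -
    fix i show "i < length ps \<Longrightarrow> anc z (ps ! i) \<and> z \<noteq> ps ! i"
    proof (induction i)
      case 0 then show ?case using D0 ps(1) by (simp add: hd_conv_nth)
    next
      case (Suc i)
      show ?case
      proof (cases "ps ! Suc i = hd ps")
        case True then show ?thesis using D0 by simp
      next
        case False
        have m: "ps ! Suc i \<in> set ps" "ps ! i \<in> set ps" using Suc.prems by auto
        show ?thesis
          by (rule step_prop[OF SV zS]) (use m ps(2) Suc padj nadj False in auto)
      qed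
    qed
  qed
  have Dl: "anc z (last ps) \<and> z \<noteq> last ps" using P[of "length ps - 1"] ps(1) by (simp add: last_conv_nth)
  obtain j where j: "last ps = g j" using lst by blast
  have Q: "\<And>k::nat. anc z (g (j + int k)) \<and> z \<noteq> g (j + int k)"
  proof -
    fix k :: nat show "anc z (g (j + int k)) \<and> z \<noteq> g (j + int k)"
    proof (induction k)
      case 0 then show ?case using Dl j by simp
    next
      case (Suc k)
      show ?case
      proof (cases "g (j + int (Suc k)) = hd ps")
        case True then show ?thesis using D0 by simp
      next
        case False
        have "d_adj S c (g (j + int k)) (g (j + int (Suc k)))" using gadj by simp
        then show ?thesis
          by (rule step_prop[OF SV zS gS gS Suc.IH]) (use nadj False in blast)
      qed
    qed
  qed
  show ?thesis
  proof
    fix v assume "v \<in> range g"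
    then obtain i where i: "v = g i" by blast
    have n0: "0 < n" using cy unfolding cyc_def by simp
    define k where "k = (i - j) mod n"
    have k0: "0 \<le> k" unfolding k_def using n0 by simp
    have "n dvd ((i - j) - (i - j) mod n)" by (rule dvd_mod_diff)
    then have "n dvd (i - (j + k))" unfolding k_def by (simp add: algebra_simps)
    then have "g (j + int (nat k)) = v" using geq i k0 by (simp add: dvd_sym)
    then show "anc z v \<and> z \<noteq> v" using Q[of "nat k"] by simp
  qed
qed

end


lemma two_in: assumes "{u,v} = {a,b}" "a \<noteq> b" "{a,b} \<subseteq> Y" "u \<in> X" "v \<in> X" "X \<inter> Y \<subseteq> {p}"
  shows False
proof -
  have "a \<in> {u,v}" "b \<in> {u,v}" using assms(1) by auto
  then have "a \<in> X" "b \<in> X" using assms(4,5) by auto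
  then have "a = p" "b = p" using assms(3,6) by auto
  then show False using assms(2) by simp
qed

lemma d_adj_sym: "d_adj S c u v \<longleftrightarrow> d_adj S c v u" unfolding d_adj_def by blast

theorem lemma6p2:
  fixes V :: "'a set" and r :: 'a and par lb :: "'a \<Rightarrow> 'a" and c :: "'a \<Rightarrow> 'a set"
    and S Vd :: "'a set" and Ed :: "'a set set" and hs ps hs' :: "'a list" and x x' :: 'a
  assumes "burling_tree V r par lb c"
    and "S \<subseteq> V"
    and "dumbbell Vd Ed hs ps hs'"
    and "hd ps = x" and "last ps = x'"
    and "S = Vd"
    and "\<forall>u\<in>S. \<forall>v\<in>S. d_adj S c u v \<longleftrightarrow> {u, v} \<in> Ed"
  shows "\<not> subordinate V r par S c (set hs) x \<or> \<not> subordinate V r par S c (set hs') x'"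
proof (rule ccontr)
  assume "\<not> (\<not> subordinate V r par S c (set hs) x \<or> \<not> subordinate V r par S c (set hs') x')"
  then have sub: "subordinate V r par S c (set hs) x" "subordinate V r par S c (set hs') x'" by auto
  interpret B: bt V r par lb c by (rule bt.intro[OF assms(1)])
  have SV: "S \<subseteq> V" by fact
  have hl: "hole_list hs" and hl': "hole_list hs'" and dps: "distinct ps" and pne: "ps \<noteq> []"
    and I1: "set hs \<inter> set ps = {x}" and I2: "set hs' \<inter> set ps = {x'}"
    and I3: "set hs \<inter> set hs' = {x} \<inter> {x'}"
    and Sd: "S = set hs \<union> set ps \<union> set hs'"
    and Ed: "Ed = cycle_edges hs \<union> path_edges ps \<union> cycle_edges hs'"
    using assms(3-6) unfolding dumbbell_def by auto
  have hne: "hs \<noteq> []" "hs' \<noteq> []" using hl hl' unfolding hole_list_def by auto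
  have adjS: "\<And>u v. u \<in> S \<Longrightarrow> v \<in> S \<Longrightarrow> d_adj S c u v \<longleftrightarrow> {u, v} \<in> Ed" using assms(7) by blast
  have adjE: "\<And>u v. d_adj S c u v \<Longrightarrow> {u, v} \<in> Ed"
  proof -
    fix u v assume "d_adj S c u v"
    then have "u \<in> S" "v \<in> S" unfolding d_adj_def d_arc_def by auto
    then show "{u, v} \<in> Ed" using adjS \<open>d_adj S c u v\<close> by blast
  qed
  have adjH: "\<forall>u\<in>set hs. \<forall>v\<in>set hs. d_adj S c u v \<longleftrightarrow> {u,v} \<in> cycle_edges hs"
  proof (intro ballI)
    fix u v assume uv: "u \<in> set hs" "v \<in> set hs"
    then have uvS: "u \<in> S" "v \<in> S" using Sd by auto
    have "{u,v} \<in> Ed \<longleftrightarrow> {u,v} \<in> cycle_edges hs"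
    proof
      assume "{u,v} \<in> Ed"
      then consider "{u,v} \<in> cycle_edges hs" | "{u,v} \<in> path_edges ps" | "{u,v} \<in> cycle_edges hs'"
        using Ed by blast
      then show "{u,v} \<in> cycle_edges hs"
      proof cases
        case 2
        obtain a b where ab: "{u,v} = {a,b}" "a \<noteq> b" using pe_ne[OF 2 dps] by blast
        have sub1: "{a,b} \<subseteq> set ps" using pe_sub[OF 2] ab by simp
        have sub2: "set hs \<inter> set ps \<subseteq> {x}" using I1 by simp
        show ?thesis using two_in[OF ab sub1 uv sub2] by simp
      next
        case 3
        obtain a b where ab: "{u,v} = {a,b}" "a \<noteq> b" using ce_ne[OF 3 hl'] by blast
        have sub1: "{a,b} \<subseteq> set hs'" using ce_sub[OF 3 hne(2)] ab by simp
        have sub2: "set hs \<inter> set hs' \<subseteq> {x}" using I3 by auto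
        show ?thesis using two_in[OF ab sub1 uv sub2] by simp
      qed simp
    next
      assume "{u,v} \<in> cycle_edges hs" then show "{u,v} \<in> Ed" using Ed by blast
    qed
    then show "d_adj S c u v \<longleftrightarrow> {u,v} \<in> cycle_edges hs" using adjS uvS by blast
  qed
  have adjH': "\<forall>u\<in>set hs'. \<forall>v\<in>set hs'. d_adj S c u v \<longleftrightarrow> {u,v} \<in> cycle_edges hs'"
  proof (intro ballI)
    fix u v assume uv: "u \<in> set hs'" "v \<in> set hs'"
    then have uvS: "u \<in> S" "v \<in> S" using Sd by auto
    have "{u,v} \<in> Ed \<longleftrightarrow> {u,v} \<in> cycle_edges hs'"
    proof
      assume "{u,v} \<in> Ed"
      then consider "{u,v} \<in> cycle_edges hs" | "{u,v} \<in> path_edges ps" | "{u,v} \<in> cycle_edges hs'"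
        using Ed by blast
      then show "{u,v} \<in> cycle_edges hs'"
      proof cases
        case 2
        obtain a b where ab: "{u,v} = {a,b}" "a \<noteq> b" using pe_ne[OF 2 dps] by blast
        have sub1: "{a,b} \<subseteq> set ps" using pe_sub[OF 2] ab by simp
        have sub2: "set hs' \<inter> set ps \<subseteq> {x'}" using I2 by auto
        show ?thesis using two_in[OF ab sub1 uv sub2] by simp
      next
        case 1
        obtain a b where ab: "{u,v} = {a,b}" "a \<noteq> b" using ce_ne[OF 1 hl] by blast
        have sub1: "{a,b} \<subseteq> set hs" using ce_sub[OF 1 hne(1)] ab by simp
        have sub2: "set hs' \<inter> set hs \<subseteq> {x'}" using I3 by auto
        show ?thesis using two_in[OF ab sub1 uv sub2] by simp
      qed simp
    next
      assume "{u,v} \<in> cycle_edges hs'" then show "{u,v} \<in> Ed" using Ed by blast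
    qed
    then show "d_adj S c u v \<longleftrightarrow> {u,v} \<in> cycle_edges hs'" using adjS uvS by blast
  qed
  define f where "f = (\<lambda>i. hs ! nat (i mod int (length hs)))"
  define f' where "f' = (\<lambda>i. hs' ! nat (i mod int (length hs')))"
  have HS: "set hs \<subseteq> S" "set hs' \<subseteq> S" "set ps \<subseteq> S" using Sd by auto
  have cyf: "B.cyc S (int (length hs)) f \<and> range f = set hs"
    by (rule B.cyc_of_list[OF hl HS(1) SV adjH]) (simp add: f_def)
  have cyf': "B.cyc S (int (length hs')) f' \<and> range f' = set hs'"
    by (rule B.cyc_of_list[OF hl' HS(2) SV adjH']) (simp add: f'_def)
  have xH: "x \<in> set hs" and xH': "x' \<in> set hs'" using I1 I2 by auto
  obtain z where z: "z \<in> set hs" "ancestor V r par z x" "z \<noteq> x"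
  proof -
    have "\<not> hole_source S c (range f) x" "\<not> hole_pivot V r par S c (range f) x"
      using sub(1) cyf unfolding subordinate_def by auto
    from B.hole_main[OF conjunct1[OF cyf] _ this] xH cyf
    show ?thesis using that by auto
  qed
  obtain z' where z': "z' \<in> set hs'" "ancestor V r par z' x'" "z' \<noteq> x'"
  proof -
    have "\<not> hole_source S c (range f') x'" "\<not> hole_pivot V r par S c (range f') x'"
      using sub(2) cyf' unfolding subordinate_def by auto
    from B.hole_main[OF conjunct1[OF cyf'] _ this] xH' cyf'
    show ?thesis using that by auto
  qed
  have padj: "\<forall>i. i + 1 < length ps \<longrightarrow> d_adj S c (ps ! i) (ps ! (i+1))"
  proof (intro allI impI)
    fix i assume i: "i + 1 < length ps"
    have "{ps ! i, ps ! (i+1)} \<in> path_edges ps" unfolding path_edges_def using i by blast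
    moreover have "ps ! i \<in> S" "ps ! (i+1) \<in> S" using i HS(3) by auto
    ultimately show "d_adj S c (ps ! i) (ps ! (i+1))" using adjS Ed by blast
  qed
  have padj2: "\<forall>i. i + 1 < length (rev ps) \<longrightarrow> d_adj S c (rev ps ! i) (rev ps ! (i+1))"
  proof (intro allI impI)
    fix i assume i: "i + 1 < length (rev ps)"
    define j where "j = length ps - Suc (Suc i)"
    have j: "j + 1 < length ps" "Suc j = length ps - Suc i" using i unfolding j_def by auto
    have "rev ps ! i = ps ! (Suc j)" "rev ps ! (i+1) = ps ! j"
      using i j unfolding j_def by (auto simp: rev_nth)
    then show "d_adj S c (rev ps ! i) (rev ps ! (i+1))" using padj j d_adj_sym by (metis Suc_eq_plus1)
  qed
  have nadj1: "\<forall>w\<in>set ps \<union> range f'. w \<noteq> hd ps \<longrightarrow> \<not> d_adj S c z w"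
  proof (intro ballI impI notI)
    fix w assume w: "w \<in> set ps \<union> range f'" "w \<noteq> hd ps" and a: "d_adj S c z w"
    have w': "w \<in> set ps \<union> set hs'" using w cyf' by auto
    have "{z, w} \<in> Ed" using adjE[OF a] .
    then consider "{z,w} \<in> cycle_edges hs" | "{z,w} \<in> path_edges ps" | "{z,w} \<in> cycle_edges hs'"
      using Ed by blast
    then show False
    proof cases
      case 1 then have "w \<in> set hs" using ce_sub[OF 1 hne(1)] by blast
      then show False using w' w(2) I1 I3 assms(4) by blast
    next
      case 2 then have "z \<in> set ps" using pe_sub[OF 2] by blast
      then show False using z I1 by blast
    next
      case 3 then have "z \<in> set hs'" using ce_sub[OF 3 hne(2)] by blast
      then show False using z I3 by blast
    qed
  qed
  have nadj2: "\<forall>w\<in>set (rev ps) \<union> range f. w \<noteq> hd (rev ps) \<longrightarrow> \<not> d_adj S c z' w"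
  proof (intro ballI impI notI)
    fix w assume w: "w \<in> set (rev ps) \<union> range f" "w \<noteq> hd (rev ps)" and a: "d_adj S c z' w"
    have w': "w \<in> set ps \<union> set hs" "w \<noteq> x'" using w cyf pne assms(5) by (auto simp: hd_rev)
    have "{z', w} \<in> Ed" using adjE[OF a] .
    then consider "{z',w} \<in> cycle_edges hs" | "{z',w} \<in> path_edges ps" | "{z',w} \<in> cycle_edges hs'"
      using Ed by blast
    then show False
    proof cases
      case 1 then have "z' \<in> set hs" using ce_sub[OF 1 hne(1)] by blast
      then show False using z' I3 by blast
    next
      case 2 then have "z' \<in> set ps" using pe_sub[OF 2] by blast
      then show False using z' I2 by blast
    next
      case 3 then have "w \<in> set hs'" using ce_sub[OF 3 hne(2)] by blast
      then show False using w' I2 I3 by blast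
    qed
  qed
  have zS: "z \<in> S" "z' \<in> S" using z z' HS by auto
  have W1: "\<forall>v\<in>range f'. ancestor V r par z v \<and> z \<noteq> v"
    by (rule B.walk[OF conjunct1[OF cyf'] pne HS(3) _ nadj1 padj zS(1)])
       (use cyf' xH' assms(4,5) z in auto)
  have W2: "\<forall>v\<in>range f. ancestor V r par z' v \<and> z' \<noteq> v"
    by (rule B.walk[OF conjunct1[OF cyf] _ _ _ nadj2 padj2 zS(2)])
       (use cyf xH pne HS(3) assms(4,5) z' in \<open>auto simp: last_rev hd_rev\<close>)
  have "ancestor V r par z z'" "z \<noteq> z'" using W1 z'(1) cyf' by auto
  moreover have "ancestor V r par z' z" using W2 z(1) cyf by auto
  ultimately show False using B.anc_antisym by blast
qed


end
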